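(* Let $n=2^k$ with $k>2$ an integer, and let $G=\langle 2^{k-1}-1\rangle$ be the subgroup of $\mathbb{Z}_n^\times$ generated by $2^{k-1}-1$. Then the coset index function $f_G$ is a $(2^k,2^{k-1}+1,\{0,2\})$ zero-difference function.
   Context: For a subgroup $G$ of $\mathbb{Z}_n^\times$ and $r\in\mathbb{Z}_n$, the coset $rG=\{rg\mid g\in G\}$; these cosets partition $\mathbb{Z}_n$, forming a set $D_G$. The coset index function induced by $G$ is $f_G:\mathbb{Z}_n\to\mathbb{Z}_{|D_G|}$, $f_G(x)=h_G(C_x)$, where $C_x$ is the coset containing $x$ and $h_G:D_G\to\mathbb{Z}_{|D_G|}$ is a fixed bijection. A function $f:A\to B$ between finite abelian groups is an $(n,m,S)$ zero-difference function if $n=|A|$, $m=|f(A)|$, and for every nonzero $a\in A$, $|\{x\in A\mid f(x+a)=f(x)\}|\in S$. Here $A=(\mathbb{Z}_n,+)$. *)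

theory Defs
  imports Main
begin

text \<open>Z_n is represented by the residues {0..<n} (nat) with arithmetic mod n.\<close>

definition gen_subgroup :: "nat \<Rightarrow> nat \<Rightarrow> nat set" where
  "gen_subgroup n g = {g ^ i mod n | i. True}"

definition coset :: "nat \<Rightarrow> nat set \<Rightarrow> nat \<Rightarrow> nat set" where
  "coset n G r = (\<lambda>g. r * g mod n) ` G"

definition cosets :: "nat \<Rightarrow> nat set \<Rightarrow> nat set set" where
  "cosets n G = coset n G ` {0..<n}"

definition coset_containing :: "nat \<Rightarrow> nat set \<Rightarrow> nat \<Rightarrow> nat set" where
  "coset_containing n G x = (THE C. C \<in> cosets n G \<and> x \<in> C)"

definition coset_index_fun :: "nat \<Rightarrow> nat set \<Rightarrow> (nat set \<Rightarrow> nat) \<Rightarrow> nat \<Rightarrow> nat" where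
  "coset_index_fun n G h x = h (coset_containing n G x)"

definition zero_difference_fun :: "nat \<Rightarrow> (nat \<Rightarrow> 'b) \<Rightarrow> nat \<Rightarrow> nat set \<Rightarrow> bool" where
  "zero_difference_fun n f m S \<longleftrightarrow>
     card (f ` {0..<n}) = m \<and>
     (\<forall>a \<in> {1..<n}. card {x \<in> {0..<n}. f ((x + a) mod n) = f x} \<in> S)"

end

theory Submission
  imports Defs
begin
lemma dvd4: fixes e x :: int assumes "e \<ge> 1" "4*e dvd x*(2*e-1)" shows "4*e dvd x"
proof -
  have "4*e dvd x*(4*e) - 2*(x*(2*e-1))" using assms by (simp add: dvd_diff)
  hence "4*e dvd 2*x" by (simp add: algebra_simps)
  then obtain t where t: "2*x = 4*e*t" by (auto simp: dvd_def)
  hence xt: "x = 2*e*t" by simp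
  hence "(2*e)*2 dvd (2*e)*(t*(2*e-1))" using assms(2) by (simp add: algebra_simps)
  hence "2 dvd t*(2*e-1)" using assms(1) by (subst (asm) dvd_mult_cancel_left) auto
  moreover have "odd (2*e-1)" by presburger
  ultimately have "2 dvd t" by (simp add: even_mult_iff)
  thus ?thesis using xt by auto
qed
lemma fix_int: fixes e x :: int assumes "e \<ge> 1" "0 \<le> x" "x < 8*e" "8*e dvd x*(4*e-2)"
  shows "x = 0 \<or> x = 4*e"
proof -
  have "2*(4*e) dvd 2*(x*(2*e-1))" using assms(4) by (simp add: algebra_simps)
  hence "4*e dvd x*(2*e-1)" using dvd_mult_cancel_left[of 2 "4*e" "x*(2*e-1)"] by linarith
  hence "4*e dvd x" using dvd4 assms(1) by blast
  then obtain q where q: "x = 4*e*q" by (auto simp: dvd_def)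
  have "q \<ge> 0" using q assms(1,2) by (simp add: zero_le_mult_iff)
  moreover have "q < 2"
  proof (rule ccontr)
    assume "\<not> q < 2"
    hence "4*e*2 \<le> 4*e*q" using assms(1) by (intro mult_left_mono) auto
    thus False using q assms(3) by linarith
  qed
  ultimately have "q = 0 \<or> q = 1" by auto
  thus ?thesis using q by auto
qed
lemma diff_int: fixes e d :: int assumes "e \<ge> 1" "\<bar>d\<bar> < 8*e" "8*e dvd d*(2-4*e)"
  shows "d = 0 \<or> d = 4*e \<or> d = -4*e"
proof -
  have "4 dvd 8*e" by simp
  hence "4 dvd d*(2-4*e)" using assms(3) dvd_trans by blast
  hence "4 dvd 2*d - 4*(e*d)" by (simp add: algebra_simps)
  hence "4 dvd 2*d" by (metis dvd_diff_commute dvd_triv_left dvd_add_right_iff diff_add_cancel)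
  hence "even d" by (metis dvd_mult_cancel_left mult_2 numeral_Bit0 zero_neq_numeral)
  then obtain t where t: "d = 2*t" by (auto elim: evenE)
  have "8*e dvd 4*t - 8*e*t" using assms(3) t by (simp add: algebra_simps)
  hence "8*e dvd 4*t" by (metis dvd_diff_commute dvd_triv_left dvd_add_right_iff diff_add_cancel)
  hence "4*(2*e) dvd 4*t" by simp
  hence "2*e dvd t" by (subst (asm) dvd_mult_cancel_left) auto
  then obtain q where q: "t = 2*e*q" by (auto simp: dvd_def)
  hence dq: "d = 4*e*q" using t by simp
  have "\<bar>q\<bar> < 2"
  proof (rule ccontr)
    assume "\<not> \<bar>q\<bar> < 2"
    hence "4*e*2 \<le> 4*e*\<bar>q\<bar>" using assms(1) by (intro mult_left_mono) auto
    moreover have "\<bar>d\<bar> = 4*e*\<bar>q\<bar>" using dq assms(1) by (simp add: abs_mult)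
    ultimately show False using assms(2) by linarith
  qed
  hence "q = 0 \<or> q = 1 \<or> q = -1" by auto
  thus ?thesis using dq by auto
qed

context
  fixes e n g :: nat
  assumes e: "e \<ge> 1" and nd: "n = 8*e" and gd: "g = 4*e - 1"
begin

definition pp :: "nat \<Rightarrow> nat" where "pp x = x * g mod n"

lemma n_pos: "n > 1" using e nd by simp
lemma g_lt: "g < n" using e nd gd by simp

lemma gg: "g * g mod n = 1"
proof -
  obtain e' where e': "e = Suc e'" using e by (cases e) auto
  have "g * g = 1 + (2*e - 1) * n" unfolding nd gd e' by (simp add: algebra_simps)
  hence "g * g mod n = 1 mod n" by (simp only: mod_mult_self1)
  thus ?thesis using n_pos by simp
qed

lemma gpow: "g ^ i mod n \<in> {1, g}"
proof (induction i)
  case 0 then show ?case using n_pos by simp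
next
  case (Suc i)
  have "g ^ Suc i mod n = g * (g ^ i mod n) mod n" by (simp add: mod_mult_right_eq)
  with Suc show ?case using gg g_lt by auto
qed

lemma G_eq: "gen_subgroup n g = {1, g}"
proof
  show "gen_subgroup n g \<subseteq> {1, g}" using gpow unfolding gen_subgroup_def by auto
  have "1 = g ^ 0 mod n" "g = g ^ 1 mod n" using n_pos g_lt by auto
  thus "{1, g} \<subseteq> gen_subgroup n g" unfolding gen_subgroup_def by blast
qed

lemma pp_lt: "pp x < n" using n_pos unfolding pp_def by simp

lemma pp_pp: "x < n \<Longrightarrow> pp (pp x) = x"
proof -
  assume x: "x < n"
  have "pp (pp x) = x * (g * g) mod n" unfolding pp_def by (simp add: mod_mult_left_eq mult.assoc)
  also have "\<dots> = x * (g * g mod n) mod n" by (simp add: mod_mult_right_eq)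
  also have "\<dots> = x" using gg x by simp
  finally show ?thesis .
qed

lemma coset_eq: "r < n \<Longrightarrow> coset n {1, g} r = {r, pp r}"
  unfolding coset_def pp_def by auto

lemma cosets_eq: "cosets n {1, g} = (\<lambda>x. {x, pp x}) ` {0..<n}"
  unfolding cosets_def using coset_eq by auto

lemma in_coset: "C \<in> cosets n {1, g} \<Longrightarrow> z \<in> C \<Longrightarrow> z < n \<and> C = {z, pp z}"
  unfolding cosets_eq using pp_pp pp_lt by auto

lemma cc_eq: "x < n \<Longrightarrow> coset_containing n {1, g} x = {x, pp x}"
  unfolding coset_containing_def
proof (rule the_equality)
  assume "x < n"
  thus "{x, pp x} \<in> cosets n {1, g} \<and> x \<in> {x, pp x}" unfolding cosets_eq by auto
next
  fix C assume "C \<in> cosets n {1, g} \<and> x \<in> C"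
  thus "C = {x, pp x}" using in_coset by blast
qed

lemma pair_eq: "x < n \<Longrightarrow> y < n \<Longrightarrow> ({y, pp y} = {x, pp x}) = (y = x \<or> y = pp x)"
  using pp_pp by (auto simp: doubleton_eq_iff)

lemma fixpt: "x < n \<Longrightarrow> pp x = x \<Longrightarrow> x = 0 \<or> x = 4*e"
proof -
  assume x: "x < n" and p: "pp x = x"
  have "int x * int g mod int n = int x mod int n" using p x unfolding pp_def
    by (metis of_nat_mod of_nat_mult mod_less)
  hence "int n dvd int x * int g - int x" by (simp add: mod_eq_dvd_iff)
  moreover have "int g = 4 * int e - 1" using gd e by simp
  ultimately have "8 * int e dvd int x * (4 * int e - 2)" using nd by (simp add: algebra_simps)
  hence "int x = 0 \<or> int x = 4 * int e" using fix_int[of "int e" "int x"] e x nd by simp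
  thus ?thesis by (metis of_nat_eq_iff of_nat_mult of_nat_numeral of_nat_0)
qed

lemma pp0: "pp 0 = 0" unfolding pp_def by simp
lemma pp4: "pp (4*e) = 4*e"
proof -
  obtain e' where e': "e = Suc e'" using e by (cases e) auto
  have "4*e*g = n*(2*e-1) + 4*e" unfolding nd gd e' by (simp add: algebra_simps)
  thus ?thesis unfolding pp_def using nd e by simp
qed

lemma card_cosets: "card (cosets n {1, g}) = 4*e + 1"
proof -
  let ?C = "cosets n {1, g}"
  have fin: "finite ?C" unfolding cosets_eq by simp
  have U: "\<Union> ?C = {0..<n}" unfolding cosets_eq using pp_lt by auto
  have disj: "pairwise disjnt ?C"
    unfolding pairwise_def disjnt_def using in_coset by blast
  have "n = card (\<Union> ?C)" using U by simp
  also have "\<dots> = (\<Sum>C\<in>?C. card C)"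
    by (rule card_Union_disjoint[OF disj]) (metis U Union_upper finite_atLeastLessThan finite_subset)
  finally have nsum: "n = (\<Sum>C\<in>?C. card C)" .
  have z: "{0} \<in> ?C" "{4*e} \<in> ?C" unfolding cosets_eq using pp0 pp4 nd e
    by (auto intro!: image_eqI[where x=0] image_eqI[where x="4*e"])
  have dist: "{0} \<noteq> {4*e}" using e by simp
  have two: "card C = 2" if "C \<in> ?C - {{0}, {4*e}}" for C
  proof -
    have "C \<in> (\<lambda>x. {x, pp x}) ` {0..<n}" using that cosets_eq by blast
    then obtain x where x: "x < n" "C = {x, pp x}" by auto
    have "pp x \<noteq> x" using fixpt[OF x(1)] x(2) that pp0 pp4 by auto
    thus ?thesis using x by auto
  qed
  have "(\<Sum>C\<in>?C. card C) = (\<Sum>C\<in>?C - {{0}, {4*e}}. card C) + (\<Sum>C\<in>{{0}, {4*e}}. card C)"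
    using z fin by (intro sum.subset_diff) auto
  also have "(\<Sum>C\<in>?C - {{0}, {4*e}}. card C) = (\<Sum>C\<in>?C - {{0}, {4*e}}. 2)"
    using two by (rule sum.cong[OF refl])
  also have "(\<Sum>C\<in>{{0}, {4*e}}. card C) = 2" using dist by simp
  also have "(\<Sum>C\<in>?C - {{0}, {4*e}}. (2::nat)) = 2 * card (?C - {{0}, {4*e}})" by simp
  also have "card (?C - {{0}, {4*e}}) = card ?C - 2" using z fin dist by (simp add: card_Diff_subset)
  finally have "n = 2 * (card ?C - 2) + 2" using nsum by simp
  moreover have "card ?C \<ge> 2" using z dist fin
    by (metis card_2_iff card_mono empty_subsetI insert_subset)
  ultimately show ?thesis using nd by simp
qed

lemma cond_iff: "x < n \<Longrightarrow> ((x + a) mod n = pp x) = (int n dvd int x + int a - int x * int g)"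
proof -
  have "((x + a) mod n = pp x) = (int ((x + a) mod n) = int (x * g mod n))" unfolding pp_def by simp
  also have "\<dots> = ((int x + int a) mod int n = (int x * int g) mod int n)" by (simp add: of_nat_mod)
  also have "\<dots> = (int n dvd int x + int a - int x * int g)" by (simp add: mod_eq_dvd_iff)
  finally show ?thesis .
qed

lemma shift: assumes "x < n" "(x + a) mod n = pp x"
  shows "((x + 4*e) mod n + a) mod n = pp ((x + 4*e) mod n)"
proof -
  define X where "X = int x"
  define Q where "Q = (X + 4 * int e) div int n"
  have "int ((x + 4*e) mod n) = (X + 4 * int e) mod int n" unfolding X_def by (simp add: of_nat_mod)
  also have "\<dots> = X + 4 * int e - int n * Q" unfolding Q_def by (simp add: minus_mult_div_eq_mod)
  finally have X': "int ((x + 4*e) mod n) = X + 4 * int e - int n * Q" .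
  have gi: "int g = 4 * int e - 1" using gd e by simp
  have d0: "int n dvd X + int a - X * int g" using cond_iff assms X_def by simp
  have "X + 4 * int e - int n * Q + int a - (X + 4 * int e - int n * Q) * int g
      = (X + int a - X * int g) + int n * (1 - 2 * int e) - int n * Q * (1 - int g)"
    by (simp add: nd gi algebra_simps)
  moreover have "int n dvd \<dots>" using d0 by simp
  ultimately have "int n dvd X + 4 * int e - int n * Q + int a - (X + 4 * int e - int n * Q) * int g" by metis
  moreover have c: "(((x + 4*e) mod n + a) mod n = pp ((x + 4*e) mod n)) = (int n dvd int ((x + 4*e) mod n) + int a - int ((x + 4*e) mod n) * int g)"
    by (rule cond_iff) (use n_pos in simp)
  ultimately show ?thesis unfolding c X' by simp
qed

lemma two_sols: assumes "x < n" "y < n" "(x + a) mod n = pp x" "(y + a) mod n = pp y"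
  shows "y = x \<or> y = (x + 4*e) mod n"
proof -
  have gi: "int g = 4 * int e - 1" using gd e by simp
  have "int n dvd int x + int a - int x * int g" "int n dvd int y + int a - int y * int g"
    using cond_iff assms by auto
  hence "int n dvd (int y + int a - int y * int g) - (int x + int a - int x * int g)" by (rule dvd_diff[rotated])
  moreover have "(int y + int a - int y * int g) - (int x + int a - int x * int g) = (int y - int x) * (2 - 4 * int e)"
    by (simp add: gi algebra_simps)
  ultimately have "8 * int e dvd (int y - int x) * (2 - 4 * int e)" using nd by simp
  moreover have "\<bar>int y - int x\<bar> < 8 * int e" using assms nd by auto
  ultimately have "int y - int x = 0 \<or> int y - int x = 4 * int e \<or> int y - int x = - 4 * int e"
    by (intro diff_int) (use e in auto)
  thus ?thesis
  proof (elim disjE)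
    assume "int y - int x = 4 * int e" thus ?thesis using assms nd by simp
  next
    assume h: "int y - int x = - 4 * int e"
    hence "x = y + 4*e" by simp
    hence "(x + 4*e) mod n = y" using assms nd by (simp add: mod_if)
    thus ?thesis by simp
  qed simp
qed

lemma card_T: assumes "a < n"
  shows "card {x \<in> {0..<n}. (x + a) mod n = pp x} \<in> {0, 2}"
proof (cases "{x \<in> {0..<n}. (x + a) mod n = pp x} = {}")
  case True then show ?thesis by simp
next
  case False
  then obtain x0 where x0: "x0 < n" "(x0 + a) mod n = pp x0" by auto
  let ?y = "(x0 + 4*e) mod n"
  have "?y < n" using n_pos by simp
  have "?y \<noteq> x0"
  proof
    assume h: "?y = x0"
    show False
    proof (cases "x0 < 4*e")
      case True then have "?y = x0 + 4*e" using nd by simp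
      thus False using h e by simp
    next
      case False then have "?y = x0 - 4*e" using nd x0 by (simp add: mod_if)
      thus False using h e False by simp
    qed
  qed
  have "{x \<in> {0..<n}. (x + a) mod n = pp x} = {x0, ?y}"
    using two_sols[OF x0(1) _ x0(2)] shift[OF x0] x0 \<open>?y < n\<close> by auto
  thus ?thesis using \<open>?y \<noteq> x0\<close> by simp
qed

lemma core: assumes hb: "bij_betw h (cosets n {1,g}) {0..<card (cosets n {1,g})}"
  shows "zero_difference_fun n (coset_index_fun n {1,g} h) (4*e+1) {0,2}"
proof -
  let ?f = "coset_index_fun n {1,g} h"
  have f: "?f x = h {x, pp x}" if "x < n" for x
    unfolding coset_index_fun_def using cc_eq that by simp
  have "?f ` {0..<n} = h ` ((\<lambda>x. {x, pp x}) ` {0..<n})"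
    using f by (auto simp: image_iff)
  also have "\<dots> = h ` cosets n {1,g}" using cosets_eq by simp
  also have "\<dots> = {0..<card (cosets n {1,g})}" using hb by (simp add: bij_betw_def)
  finally have c1: "card (?f ` {0..<n}) = 4*e+1" using card_cosets by simp
  have inj: "inj_on h (cosets n {1,g})" using hb by (simp add: bij_betw_def)
  have c2: "card {x \<in> {0..<n}. ?f ((x + a) mod n) = ?f x} \<in> {0, 2}" if a: "a \<in> {1..<n}" for a
  proof -
    have "{x \<in> {0..<n}. ?f ((x + a) mod n) = ?f x} = {x \<in> {0..<n}. (x + a) mod n = pp x}"
    proof (intro Collect_cong conj_cong refl)
      fix x assume "x \<in> {0..<n}"
      hence x: "x < n" by simp
      let ?y = "(x + a) mod n"
      have y: "?y < n" using n_pos by simp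
      have "?f ?y = ?f x \<longleftrightarrow> h {?y, pp ?y} = h {x, pp x}" using f x y by simp
      also have "\<dots> \<longleftrightarrow> {?y, pp ?y} = {x, pp x}"
        using inj x y unfolding cosets_eq by (intro inj_on_eq_iff) auto
      also have "\<dots> \<longleftrightarrow> ?y = x \<or> ?y = pp x" using pair_eq x y by simp
      also have "?y \<noteq> x"
      proof
        assume h: "?y = x"
        show False
        proof (cases "x + a < n")
          case True thus False using h a by simp
        next
          case False
          hence "?y = x + a - n" using a x by (simp add: mod_if)
          thus False using h a False by auto
        qed
      qed
      hence "(?y = x \<or> ?y = pp x) \<longleftrightarrow> ?y = pp x" by simp
      finally show "(?f ?y = ?f x) = (?y = pp x)" .
    qed
    thus ?thesis using card_T a by simp
  qed
  show ?thesis unfolding zero_difference_fun_def using c1 c2 by blast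
qed

end

theorem theorem3p4:
  fixes k n :: nat and G :: "nat set" and h :: "nat set \<Rightarrow> nat"
  assumes "k > 2"
    and "n = 2 ^ k"
    and "G = gen_subgroup n (2 ^ (k - 1) - 1)"
    and "bij_betw h (cosets n G) {0..<card (cosets n G)}"
  shows "zero_difference_fun n (coset_index_fun n G h) (2 ^ (k - 1) + 1) {0, 2}"
proof -
  define e :: nat where "e = 2 ^ (k - 3)"
  have e1: "e \<ge> 1" unfolding e_def by simp
  have k3: "k = (k - 3) + 3" using assms(1) by simp
  have k1: "k - 1 = (k - 3) + 2" using assms(1) by simp
  have nd: "n = 8 * e" unfolding e_def assms(2) by (subst k3) (simp add: power_add)
  have p1: "(2::nat) ^ (k - 1) = 4 * e" unfolding e_def k1 by (simp add: power_add)
  have gd: "(2::nat) ^ (k - 1) - 1 = 4 * e - 1" using p1 by simp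
  have G: "G = {1, 2 ^ (k - 1) - 1}" using G_eq[OF e1 nd gd] assms(3) by simp
  show ?thesis using core[OF e1 nd gd, of h] assms(4) unfolding G p1 by simp
qed

end
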